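(* Fix $i$. Suppose the following hold. (C1) $\varepsilon_{it}=g_i(\mathcal{F}_{it})$ with $\mathcal{F}_{it}=(\dots,\eta_{i,t-1},\eta_{it})$, $\eta_{it}$ i.i.d. across $t$, $g_i$ measurable, $\mathbb{E}[\varepsilon_{it}]=0$ and $\|\varepsilon_{it}\|_q\le C<\infty$ for some $q>4$. (C3) $\sum_{s\ge0}\delta_q(g_i,s)<\infty$ and $\sum_{s\ge t}\delta_q(g_i,s)=O(t^{-\gamma}(\log t)^{-A})$ with $A>\frac23(1/q+1+\gamma)$ and $\gamma=\{q^2-4+(q-2)\sqrt{q^2+20q+4}\}/(8q)$. (C4) For $1\le j\le d$, $X_{it,j}=h_{ij}(\mathcal{G}_{it,j})$ with $\mathcal{G}_{it,j}=(\dots,\xi_{i,t-1,j},\xi_{it,j})$, $\xi_{it,j}$ i.i.d. across $t$, $h_{ij}$ measurable, $\mathbb{E}[X_{it,j}]=0$ and $\|X_{it,j}\|_{q'}<\infty$, where $q'>\max\{4,\theta q\}$ for a fixed constant $\theta>0$. (C6) For all $j$, $\sum_{s\ge0}\delta_{q'}(h_{ij},s)<\infty$ and $\sum_{s\ge t}\delta_{q'}(h_{ij},s)=O(t^{-\alpha})$ for some $\alpha>1/2-1/q'$. Define $\mathbf{a}_i(\mathcal{H}_{it})=\Delta\mathbf{X}_{it}\Delta\varepsilon_{it}$ with components $a_{ij}$, and $\mathbf{b}_i(\mathcal{G}_{it})=\Delta\mathbf{X}_{it}\Delta\mathbf{X}_{it}^\top$ with entries $b_{ikl}$, where $\Delta\mathbf{X}_{it}=\mathbf{X}_{it}-\mathbf{X}_{i,t-1}$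 and $\Delta\varepsilon_{it}=\varepsilon_{it}-\varepsilon_{i,t-1}$. Then for all $j,k,l\in\{1,\dots,d\}$: \[ \sum_{s=t}^\infty\delta_p(a_{ij},s)=O(t^{-\alpha_1})\ \text{for } p=\min\{q,q'\}/2 \text{ and some } \alpha_1>1/2-1/p, \] \[ \sum_{s=t}^\infty\delta_p(b_{ikl},s)=O(t^{-\alpha_2})\ \text{for } p=q'/2 \text{ and some } \alpha_2>1/2-1/p. \]
   Context: Physical dependence measure: for i.i.d. innovations $\zeta_t$, $\mathcal{F}_t=(\dots,\zeta_{t-1},\zeta_t)$ and measurable $g$, $\delta_q(g,t)=\|g(\mathcal{F}_t)-g(\mathcal{F}_t')\|_q$, where $\mathcal{F}_t'$ is $\mathcal{F}_t$ with $\zeta_0$ replaced by an independent copy $\zeta_0'$; $\|V\|_q=(\mathbb{E}|V|^q)^{1/q}$. The component $a_{ij}$ is regarded as a function of $\mathcal{H}_{it,j}=(\dots,\nu_{i,t-1,j},\nu_{it,j})$ with joint innovations $\nu_{it,j}=(\eta_{it},\xi_{it,j})$, and $b_{ikl}$ as a function of $\mathcal{G}_{it}=(\mathcal{G}_{it,1},\dots,\mathcal{G}_{it,d})$; their physical dependence measures are computed with respect to these innovation sequences (replacing the time-$0$ innovation by an independent copy). *)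

theory Defs
  imports "HOL-Probability.Probability" "HOL-Library.Landau_Symbols"
begin

definition lpnorm :: "'a measure \<Rightarrow> real \<Rightarrow> ('a \<Rightarrow> real) \<Rightarrow> real" where
  "lpnorm M q f = (\<integral>x. \<bar>f x\<bar> powr q \<partial>M) powr (1 / q)"

definition memLp :: "'a measure \<Rightarrow> real \<Rightarrow> ('a \<Rightarrow> real) \<Rightarrow> bool" where
  "memLp M q f \<longleftrightarrow> f \<in> borel_measurable M \<and> integrable M (\<lambda>x. \<bar>f x\<bar> powr q)"

text \<open>Law of the past innovation sequence: x m plays the role of the innovation at
  time (current time - m); the coordinates are i.i.d. with law mu.\<close>
definition seqlaw :: "'s measure \<Rightarrow> (nat \<Rightarrow> 's) measure" where
  "seqlaw \<mu> = PiM UNIV (\<lambda>_. \<mu>)"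

text \<open>Physical dependence measure delta_q(g,t), t >= 0: the filtration at time t is
  x with x m = zeta_(t-m); replacing zeta_0 (coordinate t) by an independent copy x'.\<close>
definition pdm :: "'s measure \<Rightarrow> real \<Rightarrow> ((nat \<Rightarrow> 's) \<Rightarrow> real) \<Rightarrow> nat \<Rightarrow> real" where
  "pdm \<mu> q g t = lpnorm (seqlaw \<mu> \<Otimes>\<^sub>M \<mu>) q (\<lambda>z. g (fst z) - g ((fst z)(t := snd z)))"

end

theory Submission
  imports Defs
begin

lemma sq_powr: "c \<ge> 0 \<Longrightarrow> (c::real) powr (2*r) = (c powr r)^2"
proof -
  have "(c powr r)^2 = c powr r * c powr r" by (simp add: power2_eq_square)
  also have "\<dots> = c powr (r + r)" by (rule powr_add[symmetric])
  also have "r + r = 2 * r" by simp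
  finally show ?thesis by simp
qed
lemma amgm2: "(u::real) * v \<le> (u^2 + v^2) / 2"
proof -
  have "0 \<le> (u - v)^2" by simp
  then show ?thesis by (simp add: power2_diff field_simps)
qed

lemma pw_sum_bound:
  fixes a b r :: real assumes "r > 0"
  shows "\<bar>a + b\<bar> powr r \<le> 2 powr r * (\<bar>a\<bar> powr r + \<bar>b\<bar> powr r)"
proof -
  have "\<bar>a + b\<bar> \<le> 2 * max \<bar>a\<bar> \<bar>b\<bar>" by auto
  then have "\<bar>a + b\<bar> powr r \<le> (2 * max \<bar>a\<bar> \<bar>b\<bar>) powr r"
    using assms by (intro powr_mono2) auto
  also have "\<dots> = 2 powr r * max \<bar>a\<bar> \<bar>b\<bar> powr r"
    by (simp add: powr_mult)
  also have "max \<bar>a\<bar> \<bar>b\<bar> powr r \<le> \<bar>a\<bar> powr r + \<bar>b\<bar> powr r"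
    by (cases "\<bar>a\<bar> \<le> \<bar>b\<bar>") (auto simp: max_def)
  finally show ?thesis by (simp add: mult_left_mono)
qed

lemma pw_conv:
  fixes x y t r :: real
  assumes "r \<ge> 1" "x \<ge> 0" "y \<ge> 0" "0 \<le> t" "t \<le> 1"
  shows "(t * x + (1 - t) * y) powr r \<le> t * x powr r + (1 - t) * y powr r"
proof -
  have pw1: "c powr r \<le> c" if "0 \<le> c" "c \<le> 1" for c :: real
  proof (cases "c = 0")
    case False
    then have "c powr r \<le> c powr 1" using that assms by (intro powr_mono') auto
    then show ?thesis using that by simp
  qed simp
  consider "x = 0" | "y = 0" | "x > 0" "y > 0" using assms by linarith
  then show ?thesis
  proof cases
    case 1
    have "((1 - t) * y) powr r = (1 - t) powr r * y powr r"
      using assms by (simp add: powr_mult)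
    also have "\<dots> \<le> (1 - t) * y powr r"
      using pw1[of "1 - t"] assms by (intro mult_right_mono) auto
    finally show ?thesis using 1 assms by simp
  next
    case 2
    have "(t * x) powr r = t powr r * x powr r"
      using assms by (simp add: powr_mult)
    also have "\<dots> \<le> t * x powr r"
      using pw1[of "t"] assms by (intro mult_right_mono) auto
    finally show ?thesis using 2 assms by simp
  next
    case 3
    have "convex_on {0<..} (\<lambda>x. x powr r)" using powr_convex assms by auto
    from convex_onD[OF this, of t y x] 3 assms show ?thesis
      by (simp add: algebra_simps)
  qed
qed

lemma lp_zero_AE:
  fixes f :: "'a \<Rightarrow> real"
  assumes "r > 0" "memLp M r f" "(\<integral>x. \<bar>f x\<bar> powr r \<partial>M) = 0"
  shows "AE x in M. f x = 0"
proof -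
  have "AE x in M. \<bar>f x\<bar> powr r = 0"
    using assms unfolding memLp_def by (subst integral_nonneg_eq_0_iff_AE[symmetric]) auto
  then show ?thesis by eventually_elim simp
qed

lemma memLp_integrable: "memLp M r f \<Longrightarrow> integrable M (\<lambda>x. \<bar>f x\<bar> powr r)"
  by (simp add: memLp_def)

lemma lpnorm_nonneg: "lpnorm M r f \<ge> 0"
  by (simp add: lpnorm_def)

lemma int_powr_nonneg: "(0::real) \<le> (\<integral>x. \<bar>(f::'a\<Rightarrow>real) x\<bar> powr r \<partial>M)"
  by (rule integral_nonneg_AE) simp

lemma memLp_add:
  fixes f g :: "'a \<Rightarrow> real"
  assumes r: "r > 0" and f: "memLp M r f" and g: "memLp M r g"
  shows "memLp M r (\<lambda>x. f x + g x)"
proof -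
  have m: "(\<lambda>x. f x + g x) \<in> borel_measurable M" using f g by (auto simp: memLp_def)
  have "integrable M (\<lambda>x. 2 powr r * (\<bar>f x\<bar> powr r + \<bar>g x\<bar> powr r))"
    using f g by (auto simp: memLp_def)
  then have "integrable M (\<lambda>x. \<bar>f x + g x\<bar> powr r)"
  proof (rule Bochner_Integration.integrable_bound)
    show "(\<lambda>x. \<bar>f x + g x\<bar> powr r) \<in> borel_measurable M" using m by measurable
    show "AE x in M. norm (\<bar>f x + g x\<bar> powr r) \<le> norm (2 powr r * (\<bar>f x\<bar> powr r + \<bar>g x\<bar> powr r))"
    proof (intro AE_I2)
      fix x
      have "0 \<le> 2 powr r * (\<bar>f x\<bar> powr r + \<bar>g x\<bar> powr r)" by simp
      then show "norm (\<bar>f x + g x\<bar> powr r) \<le> norm (2 powr r * (\<bar>f x\<bar> powr r + \<bar>g x\<bar> powr r))"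
        using pw_sum_bound[OF r, of "f x" "g x"] by simp
    qed
  qed
  then show ?thesis using m by (simp add: memLp_def)
qed

lemma memLp_uminus:
  fixes f :: "'a \<Rightarrow> real"
  shows "memLp M r f \<Longrightarrow> memLp M r (\<lambda>x. - f x)"
  by (simp add: memLp_def)

lemma memLp_diff:
  fixes f g :: "'a \<Rightarrow> real"
  assumes r: "r > 0" and f: "memLp M r f" and g: "memLp M r g"
  shows "memLp M r (\<lambda>x. f x - g x)"
  using memLp_add[OF r f memLp_uminus[OF g]] by simp

lemma lpnorm_AE_cong:
  fixes f g :: "'a \<Rightarrow> real"
  assumes [measurable]: "f \<in> borel_measurable M" "g \<in> borel_measurable M"
  shows "(AE x in M. f x = g x) \<Longrightarrow> lpnorm M r f = lpnorm M r g"
  unfolding lpnorm_def by (intro arg_cong[where f="\<lambda>x. x powr (1/r)"] integral_cong_AE) auto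

lemma minkowski:
  fixes f g :: "'a \<Rightarrow> real"
  assumes r: "r \<ge> 1" and f: "memLp M r f" and g: "memLp M r g"
  shows "lpnorm M r (\<lambda>x. f x + g x) \<le> lpnorm M r f + lpnorm M r g"
proof -
  define A where "A = (\<integral>x. \<bar>f x\<bar> powr r \<partial>M)"
  define B where "B = (\<integral>x. \<bar>g x\<bar> powr r \<partial>M)"
  have A0: "A \<ge> 0" "B \<ge> 0" unfolding A_def B_def by (rule int_powr_nonneg)+
  have fg: "memLp M r (\<lambda>x. f x + g x)" using memLp_add[of r M f g] r f g by auto
  consider "A = 0" | "B = 0" | "A > 0" "B > 0" using A0 by linarith
  then show ?thesis
  proof cases
    case 1
    then have "AE x in M. f x = 0" using lp_zero_AE[of r M f] r f A_def by auto
    then have "lpnorm M r (\<lambda>x. f x + g x) = lpnorm M r g"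
      using f g by (intro lpnorm_AE_cong) (auto simp: memLp_def)
    then show ?thesis using lpnorm_nonneg[of M r f] by simp
  next
    case 2
    then have "AE x in M. g x = 0" using lp_zero_AE[of r M g] r g B_def by auto
    then have "lpnorm M r (\<lambda>x. f x + g x) = lpnorm M r f"
      using f g by (intro lpnorm_AE_cong) (auto simp: memLp_def)
    then show ?thesis using lpnorm_nonneg[of M r g] by simp
  next
    case 3
    define a where "a = A powr (1/r)"
    define b where "b = B powr (1/r)"
    have ab: "a > 0" "b > 0" using 3 by (auto simp: a_def b_def)
    have ar: "a powr r = A" "b powr r = B" using 3 r by (auto simp: a_def b_def powr_powr)
    define t where "t = a / (a + b)"
    have t: "0 \<le> t" "t \<le> 1" "1 - t = b / (a + b)" using ab by (auto simp: t_def field_simps)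
    have pw: "\<bar>f x + g x\<bar> powr r \<le> (a + b) powr r * (t * (\<bar>f x\<bar> powr r / A) + (1 - t) * (\<bar>g x\<bar> powr r / B))" for x
    proof -
      have "\<bar>f x + g x\<bar> powr r \<le> (\<bar>f x\<bar> + \<bar>g x\<bar>) powr r"
        using r by (intro powr_mono2) auto
      also have "\<bar>f x\<bar> + \<bar>g x\<bar> = (a + b) * (t * (\<bar>f x\<bar> / a) + (1 - t) * (\<bar>g x\<bar> / b))"
      proof -
        have e1: "t * (\<bar>f x\<bar> / a) = \<bar>f x\<bar> / (a + b)" using ab by (simp add: t_def)
        have e2: "(1 - t) * (\<bar>g x\<bar> / b) = \<bar>g x\<bar> / (a + b)" using ab by (simp add: t(3))
        have "a + b > 0" using ab by simp
        then show ?thesis unfolding e1 e2 by (simp add: add_divide_distrib[symmetric])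
      qed
      also have "((a + b) * (t * (\<bar>f x\<bar> / a) + (1 - t) * (\<bar>g x\<bar> / b))) powr r
         = (a + b) powr r * (t * (\<bar>f x\<bar> / a) + (1 - t) * (\<bar>g x\<bar> / b)) powr r"
        using ab t by (intro powr_mult; simp)
      also have "(t * (\<bar>f x\<bar> / a) + (1 - t) * (\<bar>g x\<bar> / b)) powr r
          \<le> t * (\<bar>f x\<bar> / a) powr r + (1 - t) * (\<bar>g x\<bar> / b) powr r"
        using ab t r by (intro pw_conv) auto
      also have "(\<bar>f x\<bar> / a) powr r = \<bar>f x\<bar> powr r / A"
        using ab ar by (simp add: powr_divide)
      also have "(\<bar>g x\<bar> / b) powr r = \<bar>g x\<bar> powr r / B"
        using ab ar by (simp add: powr_divide)
      finally show ?thesis using ab by (simp add: mult_left_mono)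
    qed
    have "(\<integral>x. \<bar>f x + g x\<bar> powr r \<partial>M) \<le>
        (\<integral>x. (a + b) powr r * (t * (\<bar>f x\<bar> powr r / A) + (1 - t) * (\<bar>g x\<bar> powr r / B)) \<partial>M)"
      using fg f g pw by (intro integral_mono) (auto simp: memLp_def)
    also have "\<dots> = (a + b) powr r * (t * (A / A) + (1 - t) * (B / B))"
      using f g by (simp add: memLp_def A_def B_def)
    also have "\<dots> = (a + b) powr r" using 3 by simp
    finally have I: "(\<integral>x. \<bar>f x + g x\<bar> powr r \<partial>M) \<le> (a + b) powr r" .
    have "lpnorm M r (\<lambda>x. f x + g x) \<le> ((a + b) powr r) powr (1/r)"
      unfolding lpnorm_def using I r by (intro powr_mono2) (auto intro: int_powr_nonneg)
    also have "\<dots> = a + b" using ab r by (simp add: powr_powr)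
    finally show ?thesis by (simp add: lpnorm_def a_def b_def A_def B_def)
  qed
qed

lemma memLp_mult:
  fixes f g :: "'a \<Rightarrow> real"
  assumes r: "r > 0" and f: "memLp M (2*r) f" and g: "memLp M (2*r) g"
  shows "memLp M r (\<lambda>x. f x * g x)"
proof -
  have m: "(\<lambda>x. f x * g x) \<in> borel_measurable M" using f g by (auto simp: memLp_def)
  have pw: "\<bar>f x * g x\<bar> powr r \<le> (\<bar>f x\<bar> powr (2*r) + \<bar>g x\<bar> powr (2*r)) / 2" for x
  proof -
    have sq: "c powr (2*r) = (c powr r)^2" if "c \<ge> 0" for c :: real
      using that by (rule sq_powr)
    have "\<bar>f x * g x\<bar> powr r = \<bar>f x\<bar> powr r * \<bar>g x\<bar> powr r" by (simp add: abs_mult powr_mult)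
    also have "\<dots> \<le> ((\<bar>f x\<bar> powr r)^2 + (\<bar>g x\<bar> powr r)^2) / 2"
      by (rule amgm2)
    finally show ?thesis by (simp add: sq)
  qed
  have "integrable M (\<lambda>x. (\<bar>f x\<bar> powr (2*r) + \<bar>g x\<bar> powr (2*r)) / 2)"
    using f g by (auto simp: memLp_def)
  then have "integrable M (\<lambda>x. \<bar>f x * g x\<bar> powr r)"
  proof (rule Bochner_Integration.integrable_bound)
    show "(\<lambda>x. \<bar>f x * g x\<bar> powr r) \<in> borel_measurable M" using m by measurable
    show "AE x in M. norm (\<bar>f x * g x\<bar> powr r) \<le> norm ((\<bar>f x\<bar> powr (2*r) + \<bar>g x\<bar> powr (2*r)) / 2)"
      using pw by (intro AE_I2) (simp add: order_trans[OF pw])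
  qed
  then show ?thesis using m by (simp add: memLp_def)
qed

lemma holder2:
  fixes f g :: "'a \<Rightarrow> real"
  assumes r: "r > 0" and f: "memLp M (2*r) f" and g: "memLp M (2*r) g"
  shows "lpnorm M r (\<lambda>x. f x * g x) \<le> lpnorm M (2*r) f * lpnorm M (2*r) g"
proof -
  define A where "A = (\<integral>x. \<bar>f x\<bar> powr (2*r) \<partial>M)"
  define B where "B = (\<integral>x. \<bar>g x\<bar> powr (2*r) \<partial>M)"
  have A0: "A \<ge> 0" "B \<ge> 0" unfolding A_def B_def by (rule int_powr_nonneg)+
  have fg: "memLp M r (\<lambda>x. f x * g x)" using memLp_mult r f g by blast
  have fgm: "(\<lambda>x. f x * g x) \<in> borel_measurable M" using fg by (simp add: memLp_def)
  have z: "lpnorm M r (\<lambda>x. f x * g x) = 0" if "AE x in M. f x * g x = 0"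
  proof -
    have "lpnorm M r (\<lambda>x. f x * g x) = lpnorm M r (\<lambda>x. 0)"
      using that fgm by (intro lpnorm_AE_cong) auto
    then show ?thesis using r by (simp add: lpnorm_def)
  qed
  have nn: "0 \<le> lpnorm M (2*r) f * lpnorm M (2*r) g" by (simp add: lpnorm_nonneg)
  consider "A = 0" | "B = 0" | "A > 0" "B > 0" using A0 by linarith
  then show ?thesis
  proof cases
    case 1
    then have "AE x in M. f x = 0" using lp_zero_AE[of "2*r" M f] r f A_def by auto
    then have "AE x in M. f x * g x = 0" by eventually_elim simp
    then show ?thesis using z nn by simp
  next
    case 2
    then have "AE x in M. g x = 0" using lp_zero_AE[of "2*r" M g] r g B_def by auto
    then have "AE x in M. f x * g x = 0" by eventually_elim simp
    then show ?thesis using z nn by simp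
  next
    case 3
    define a where "a = sqrt A"
    define b where "b = sqrt B"
    have ab: "a > 0" "b > 0" "a^2 = A" "b^2 = B" using 3 by (auto simp: a_def b_def)
    have sq: "c powr (2*r) = (c powr r)^2" if "c \<ge> 0" for c :: real
      using that by (rule sq_powr)
    have pw: "\<bar>f x * g x\<bar> powr r \<le> a * b * ((\<bar>f x\<bar> powr (2*r) / A + \<bar>g x\<bar> powr (2*r) / B) / 2)" for x
    proof -
      define u where "u = \<bar>f x\<bar> powr r / a"
      define v where "v = \<bar>g x\<bar> powr r / b"
      have "\<bar>f x * g x\<bar> powr r = a * b * (u * v)"
        using ab by (simp add: abs_mult powr_mult u_def v_def)
      also have "u * v \<le> (u^2 + v^2) / 2"
        by (rule amgm2)
      also have "u^2 = \<bar>f x\<bar> powr (2*r) / A" using ab by (simp add: u_def sq power_divide)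
      also have "v^2 = \<bar>g x\<bar> powr (2*r) / B" using ab by (simp add: v_def sq power_divide)
      finally show ?thesis using ab by (simp add: mult_left_mono)
    qed
    have "(\<integral>x. \<bar>f x * g x\<bar> powr r \<partial>M) \<le>
        (\<integral>x. a * b * ((\<bar>f x\<bar> powr (2*r) / A + \<bar>g x\<bar> powr (2*r) / B) / 2) \<partial>M)"
      using fg f g pw by (intro integral_mono) (auto simp: memLp_def)
    also have "\<dots> = a * b * ((A / A + B / B) / 2)"
      using f g by (simp add: memLp_def A_def B_def)
    also have "\<dots> = a * b" using 3 by simp
    finally have I: "(\<integral>x. \<bar>f x * g x\<bar> powr r \<partial>M) \<le> a * b" .
    have "lpnorm M r (\<lambda>x. f x * g x) \<le> (a * b) powr (1/r)"
      unfolding lpnorm_def using I r by (intro powr_mono2) (auto intro: int_powr_nonneg)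
    also have "\<dots> = a powr (1/r) * b powr (1/r)" using ab by (simp add: powr_mult)
    also have "a powr (1/r) = A powr (1/(2*r))"
      using 3 by (simp add: a_def powr_half_sqrt[symmetric] powr_powr)
    also have "b powr (1/r) = B powr (1/(2*r))"
      using 3 by (simp add: b_def powr_half_sqrt[symmetric] powr_powr)
    finally show ?thesis by (simp add: lpnorm_def A_def B_def)
  qed
qed

lemma lyapunov:
  fixes f :: "'a \<Rightarrow> real"
  assumes P: "prob_space M" and r: "0 < r" "r \<le> s" and f: "memLp M s f"
  shows "memLp M r f" "lpnorm M r f \<le> lpnorm M s f"
proof -
  interpret prob_space M by fact
  have s: "s > 0" using r by simp
  have m: "f \<in> borel_measurable M" using f by (simp add: memLp_def)
  have pw: "\<bar>f x\<bar> powr r \<le> \<bar>f x\<bar> powr s + 1" for x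
  proof (cases "\<bar>f x\<bar> \<le> 1")
    case True
    then have "\<bar>f x\<bar> powr r \<le> 1" using r by (intro powr_le1) auto
    then show ?thesis by (smt (verit) powr_ge_zero)
  next
    case False
    then have "\<bar>f x\<bar> powr r \<le> \<bar>f x\<bar> powr s" using r by (intro powr_mono) auto
    then show ?thesis by simp
  qed
  have "integrable M (\<lambda>x. \<bar>f x\<bar> powr s + 1)" using f by (simp add: memLp_def)
  then have int: "integrable M (\<lambda>x. \<bar>f x\<bar> powr r)"
  proof (rule Bochner_Integration.integrable_bound)
    show "(\<lambda>x. \<bar>f x\<bar> powr r) \<in> borel_measurable M" using m by measurable
    show "AE x in M. norm (\<bar>f x\<bar> powr r) \<le> norm (\<bar>f x\<bar> powr s + 1)"
      using pw by (intro AE_I2) (simp add: order_trans[OF pw])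
  qed
  then show fr: "memLp M r f" using m by (simp add: memLp_def)
  define B where "B = (\<integral>x. \<bar>f x\<bar> powr s \<partial>M)"
  have B0: "B \<ge> 0" unfolding B_def by (rule int_powr_nonneg)
  show "lpnorm M r f \<le> lpnorm M s f"
  proof (cases "B = 0")
    case True
    then have "AE x in M. f x = 0" using lp_zero_AE[of s M f] s f B_def by auto
    then have "lpnorm M r f = lpnorm M r (\<lambda>x. 0)" using m by (intro lpnorm_AE_cong) auto
    then show ?thesis using r by (simp add: lpnorm_def lpnorm_nonneg)
  next
    case False
    then have Bp: "B > 0" using B0 by simp
    define \<theta> where "\<theta> = r / s"
    have th: "0 < \<theta>" "\<theta> \<le> 1" using r by (auto simp: \<theta>_def)
    have pw2: "\<bar>f x\<bar> powr r \<le> B powr \<theta> * (\<theta> * (\<bar>f x\<bar> powr s / B) + (1 - \<theta>))" for x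
    proof -
      define y where "y = \<bar>f x\<bar> powr s / B"
      have y0: "y \<ge> 0" using Bp by (simp add: y_def)
      have yy: "y powr \<theta> \<le> \<theta> * y + (1 - \<theta>)"
      proof (cases "y = 0")
        case True then show ?thesis using th by simp
      next
        case False
        then show ?thesis using Youngs_inequality_0[of \<theta> "1 - \<theta>" y 1] th y0 by simp
      qed
      have "\<bar>f x\<bar> powr r = B powr \<theta> * y powr \<theta>"
        using Bp r by (simp add: y_def powr_divide powr_powr \<theta>_def)
      also have "\<dots> \<le> B powr \<theta> * (\<theta> * y + (1 - \<theta>))" using yy by (simp add: mult_left_mono)
      finally show ?thesis by (simp add: y_def)
    qed
    have "(\<integral>x. \<bar>f x\<bar> powr r \<partial>M) \<le> (\<integral>x. B powr \<theta> * (\<theta> * (\<bar>f x\<bar> powr s / B) + (1 - \<theta>)) \<partial>M)"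
      using int f pw2 by (intro integral_mono) (auto simp: memLp_def)
    also have "\<dots> = B powr \<theta> * (\<theta> * (B / B) + (1 - \<theta>))"
      using f by (simp add: memLp_def B_def prob_space)
    also have "\<dots> = B powr \<theta>" using Bp by simp
    finally have I: "(\<integral>x. \<bar>f x\<bar> powr r \<partial>M) \<le> B powr \<theta>" .
    have "lpnorm M r f \<le> (B powr \<theta>) powr (1/r)"
      unfolding lpnorm_def using I r by (intro powr_mono2) (auto intro: int_powr_nonneg)
    also have "\<dots> = B powr (1/s)" using r by (simp add: powr_powr \<theta>_def)
    finally show ?thesis by (simp add: lpnorm_def B_def)
  qed
qed


lemma memLp_distr:
  fixes f :: "'b \<Rightarrow> real"
  assumes \<phi>: "\<phi> \<in> measurable M N" and f: "f \<in> borel_measurable N"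
  shows "memLp (distr M N \<phi>) r f \<longleftrightarrow> memLp M r (\<lambda>x. f (\<phi> x))"
    and "lpnorm (distr M N \<phi>) r f = lpnorm M r (\<lambda>x. f (\<phi> x))"
proof -
  have fm: "(\<lambda>x. f (\<phi> x)) \<in> borel_measurable M" using \<phi> f by measurable
  have fm2: "(\<lambda>x. \<bar>f x\<bar> powr r) \<in> borel_measurable N" using f by measurable
  show "memLp (distr M N \<phi>) r f \<longleftrightarrow> memLp M r (\<lambda>x. f (\<phi> x))"
    unfolding memLp_def using fm f \<phi> fm2
    by (simp add: integrable_distr_eq)
  show "lpnorm (distr M N \<phi>) r f = lpnorm M r (\<lambda>x. f (\<phi> x))"
    unfolding lpnorm_def using \<phi> fm2 by (simp add: integral_distr)
qed

lemma prob_seqlaw: "prob_space \<mu> \<Longrightarrow> prob_space (seqlaw \<mu>)"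
  unfolding seqlaw_def by (rule prob_space_PiM)

lemma prob_Q: "prob_space \<mu> \<Longrightarrow> prob_space (seqlaw \<mu> \<Otimes>\<^sub>M \<mu>)"
  by (intro prob_space_pair prob_seqlaw)

lemma sets_seqlaw: "sets (seqlaw \<mu>) = sets (PiM UNIV (\<lambda>_. \<mu>))"
  by (simp add: seqlaw_def)

lemma space_seqlaw: "space (seqlaw \<mu>) = space (PiM UNIV (\<lambda>_. \<mu>))"
  by (simp add: seqlaw_def)

lemma meas_seq_UNIV:
  assumes "\<And>i. (\<lambda>x. f x i) \<in> measurable N M"
  shows "f \<in> measurable N (PiM UNIV (\<lambda>_. M))"
proof -
  have "(\<lambda>x. \<lambda>i\<in>UNIV. f x i) \<in> measurable N (PiM UNIV (\<lambda>_. M))"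
    using assms by (intro measurable_restrict)
  then show ?thesis by (simp add: restrict_UNIV)
qed

lemma rep_measurable:
  "(\<lambda>z. (fst z)(s := snd z)) \<in> measurable (seqlaw \<mu> \<Otimes>\<^sub>M \<mu>) (seqlaw \<mu>)"
  unfolding seqlaw_def
proof (rule meas_seq_UNIV)
  fix i
  show "(\<lambda>x. ((fst x)(s := snd x)) i) \<in> measurable (Pi\<^sub>M UNIV (\<lambda>_. \<mu>) \<Otimes>\<^sub>M \<mu>) \<mu>"
    by (cases "i = s") simp_all
qed

lemma rep_preserve:
  assumes "prob_space \<mu>"
  shows "distr (seqlaw \<mu> \<Otimes>\<^sub>M \<mu>) (seqlaw \<mu>) (\<lambda>z. (fst z)(s := snd z)) = seqlaw \<mu>"
proof -
  interpret m: prob_space \<mu> by fact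
  interpret P: prob_space "seqlaw \<mu>" using assms by (rule prob_seqlaw)
  interpret pair_sigma_finite "seqlaw \<mu>" \<mu> by unfold_locales
  have sw: "seqlaw \<mu> \<Otimes>\<^sub>M \<mu> = distr (\<mu> \<Otimes>\<^sub>M seqlaw \<mu>) (seqlaw \<mu> \<Otimes>\<^sub>M \<mu>) (\<lambda>(x, y). (y, x))"
    by (rule distr_pair_swap)
  have "distr (seqlaw \<mu> \<Otimes>\<^sub>M \<mu>) (seqlaw \<mu>) (\<lambda>z. (fst z)(s := snd z))
     = distr (\<mu> \<Otimes>\<^sub>M seqlaw \<mu>) (seqlaw \<mu>) ((\<lambda>z. (fst z)(s := snd z)) \<circ> (\<lambda>(x, y). (y, x)))"
    by (subst sw) (intro distr_distr rep_measurable measurable_pair_swap')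
  also have "((\<lambda>z. (fst z)(s := snd z)) \<circ> (\<lambda>(x, y). (y, x))) = (\<lambda>(x, X). X(s := x))"
    by (auto simp: fun_eq_iff)
  also have "distr (\<mu> \<Otimes>\<^sub>M seqlaw \<mu>) (seqlaw \<mu>) (\<lambda>(x, X). X(s := x)) = seqlaw \<mu>"
    using distr_pair_PiM_eq_PiM[of UNIV "\<lambda>_. \<mu>" s] assms unfolding seqlaw_def by simp
  finally show ?thesis .
qed

lemma fst_preserve:
  assumes "prob_space \<mu>"
  shows "distr (seqlaw \<mu> \<Otimes>\<^sub>M \<mu>) (seqlaw \<mu>) fst = seqlaw \<mu>"
  using prob_space.distr_pair_fst[OF assms] .

lemma shift_measurable:
  "(\<lambda>y. \<lambda>m. y (Suc m)) \<in> measurable (seqlaw \<mu>) (seqlaw \<mu>)"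
  unfolding seqlaw_def by (rule meas_seq_UNIV) simp

lemma shift_preserve:
  assumes "prob_space \<mu>"
  shows "distr (seqlaw \<mu>) (seqlaw \<mu>) (\<lambda>y. \<lambda>m. y (Suc m)) = seqlaw \<mu>"
  using distr_PiM_reindex[of UNIV "\<lambda>_. \<mu>" Suc UNIV] assms unfolding seqlaw_def by (simp add: restrict_UNIV)

lemma map_measurable:
  assumes "\<pi> \<in> measurable \<mu> T"
  shows "(\<lambda>y m. \<pi> (y m)) \<in> measurable (seqlaw \<mu>) (seqlaw T)"
  unfolding seqlaw_def
proof (rule meas_seq_UNIV)
  fix i
  show "(\<lambda>x. \<pi> (x i)) \<in> measurable (PiM UNIV (\<lambda>_. \<mu>)) T"
    using measurable_compose[OF measurable_component_singleton[of i UNIV "\<lambda>_. \<mu>"] assms] by simp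
qed

lemma map_preserve:
  assumes P: "prob_space \<mu>" and \<pi>: "\<pi> \<in> measurable \<mu> T"
  shows "distr (seqlaw \<mu>) (seqlaw T) (\<lambda>y m. \<pi> (y m)) = seqlaw (distr \<mu> T \<pi>)"
proof -
  interpret m: prob_space \<mu> by fact
  interpret PP: product_prob_space "\<lambda>_. \<mu>" UNIV by unfold_locales
  have pd: "prob_space (distr \<mu> T \<pi>)" using \<pi> by (rule m.prob_space_distr)
  have meas: "(\<lambda>y m. \<pi> (y m)) \<in> measurable (seqlaw \<mu>) (seqlaw T)" using \<pi> by (rule map_measurable)
  show ?thesis unfolding seqlaw_def
  proof (rule measure_eqI_PiM_infinite[where I="UNIV::nat set" and M="\<lambda>_. distr \<mu> T \<pi>"])
    show "sets (distr (Pi\<^sub>M (UNIV::nat set) (\<lambda>_. \<mu>)) (Pi\<^sub>M UNIV (\<lambda>_. T)) (\<lambda>y m. \<pi> (y m))) = sets (Pi\<^sub>M UNIV (\<lambda>_. distr \<mu> T \<pi>))"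
      by (simp only: sets_distr) (rule sets_PiM_cong; simp)
    show "sets (Pi\<^sub>M UNIV (\<lambda>_. distr \<mu> T \<pi>)) = sets (Pi\<^sub>M UNIV (\<lambda>_. distr \<mu> T \<pi>))" by simp
    show "finite_measure (distr (Pi\<^sub>M (UNIV::nat set) (\<lambda>_. \<mu>)) (Pi\<^sub>M UNIV (\<lambda>_. T)) (\<lambda>y m. \<pi> (y m)))"
      using prob_space.finite_measure[OF prob_space.prob_space_distr[OF prob_seqlaw[OF P] meas]]
      unfolding seqlaw_def by auto
  next
    fix A J assume J: "finite J" "J \<subseteq> (UNIV :: nat set)" and A: "\<And>i. i \<in> J \<Longrightarrow> A i \<in> sets (distr \<mu> T \<pi>)"
    have AT: "\<And>i. i \<in> J \<Longrightarrow> A i \<in> sets T" using A by simp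
    have pe: "prod_emb UNIV (\<lambda>_. distr \<mu> T \<pi>) J (Pi\<^sub>E J A) = prod_emb UNIV (\<lambda>_. T) J (Pi\<^sub>E J A)"
      by (simp add: prod_emb_def)
    have inS: "prod_emb UNIV (\<lambda>_. T) J (Pi\<^sub>E J A) \<in> sets (Pi\<^sub>M UNIV (\<lambda>_. T))"
      using J AT by (intro sets_PiM_I) auto
    have seteq: "(\<lambda>y m. \<pi> (y m)) -` prod_emb UNIV (\<lambda>_. T) J (Pi\<^sub>E J A) \<inter> space (Pi\<^sub>M (UNIV::nat set) (\<lambda>_. \<mu>))
        = {x \<in> space (Pi\<^sub>M (UNIV::nat set) (\<lambda>_. \<mu>)). \<forall>i\<in>J. x i \<in> \<pi> -` A i \<inter> space \<mu>}"
    proof (intro set_eqI iffI)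
      fix x assume x: "x \<in> (\<lambda>y m. \<pi> (y m)) -` prod_emb UNIV (\<lambda>_. T) J (Pi\<^sub>E J A) \<inter> space (Pi\<^sub>M (UNIV::nat set) (\<lambda>_. \<mu>))"
      then have "restrict (\<lambda>m. \<pi> (x m)) J \<in> Pi\<^sub>E J A" by (simp add: prod_emb_iff)
      then have "\<forall>i\<in>J. \<pi> (x i) \<in> A i" by (auto simp: PiE_iff)
      moreover have "\<forall>i. x i \<in> space \<mu>" using x by (auto simp: space_PiM)
      ultimately show "x \<in> {x \<in> space (Pi\<^sub>M (UNIV::nat set) (\<lambda>_. \<mu>)). \<forall>i\<in>J. x i \<in> \<pi> -` A i \<inter> space \<mu>}"
        using x by auto
    next
      fix x assume x: "x \<in> {x \<in> space (Pi\<^sub>M (UNIV::nat set) (\<lambda>_. \<mu>)). \<forall>i\<in>J. x i \<in> \<pi> -` A i \<inter> space \<mu>}"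
      have sp: "\<forall>i. x i \<in> space \<mu>" using x by (auto simp: space_PiM)
      have "restrict (\<lambda>m. \<pi> (x m)) J \<in> Pi\<^sub>E J A" using x by (auto simp: PiE_iff)
      moreover have "\<forall>i. \<pi> (x i) \<in> space T" using sp measurable_space[OF \<pi>] by auto
      ultimately show "x \<in> (\<lambda>y m. \<pi> (y m)) -` prod_emb UNIV (\<lambda>_. T) J (Pi\<^sub>E J A) \<inter> space (Pi\<^sub>M (UNIV::nat set) (\<lambda>_. \<mu>))"
        using x by (simp add: prod_emb_iff)
    qed
    have "emeasure (distr (Pi\<^sub>M (UNIV::nat set) (\<lambda>_. \<mu>)) (Pi\<^sub>M UNIV (\<lambda>_. T)) (\<lambda>y m. \<pi> (y m)))
            (prod_emb UNIV (\<lambda>_. distr \<mu> T \<pi>) J (Pi\<^sub>E J A))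
        = emeasure (Pi\<^sub>M (UNIV::nat set) (\<lambda>_. \<mu>)) ((\<lambda>y m. \<pi> (y m)) -` prod_emb UNIV (\<lambda>_. T) J (Pi\<^sub>E J A) \<inter> space (Pi\<^sub>M (UNIV::nat set) (\<lambda>_. \<mu>)))"
      unfolding pe using meas inS unfolding seqlaw_def by (intro emeasure_distr) auto
    also have "\<dots> = (\<Prod>i\<in>J. emeasure \<mu> (\<pi> -` A i \<inter> space \<mu>))"
      unfolding seteq using J AT \<pi> by (intro PP.emeasure_PiM_Collect) auto
    also have "\<dots> = (\<Prod>i\<in>J. emeasure (distr \<mu> T \<pi>) (A i))"
      using AT \<pi> by (intro prod.cong refl) (simp add: emeasure_distr)
    also have "\<dots> = emeasure (Pi\<^sub>M UNIV (\<lambda>_. distr \<mu> T \<pi>)) (prod_emb UNIV (\<lambda>_. distr \<mu> T \<pi>) J (Pi\<^sub>E J A))"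
      using J A pd by (intro emeasure_PiM_emb[symmetric]) auto
    finally show "emeasure (distr (Pi\<^sub>M (UNIV::nat set) (\<lambda>_. \<mu>)) (Pi\<^sub>M UNIV (\<lambda>_. T)) (\<lambda>y m. \<pi> (y m)))
            (prod_emb UNIV (\<lambda>_. distr \<mu> T \<pi>) J (Pi\<^sub>E J A)) =
          emeasure (Pi\<^sub>M UNIV (\<lambda>_. distr \<mu> T \<pi>)) (prod_emb UNIV (\<lambda>_. distr \<mu> T \<pi>) J (Pi\<^sub>E J A))" .
  qed
qed


lemma memLp_meas: "memLp M r f \<Longrightarrow> f \<in> borel_measurable M"
  by (simp add: memLp_def)

lemma lp_fst:
  assumes "prob_space \<mu>" "u \<in> borel_measurable (seqlaw \<mu>)"
  shows "memLp (seqlaw \<mu> \<Otimes>\<^sub>M \<mu>) r (\<lambda>z. u (fst z)) \<longleftrightarrow> memLp (seqlaw \<mu>) r u"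
    and "lpnorm (seqlaw \<mu> \<Otimes>\<^sub>M \<mu>) r (\<lambda>z. u (fst z)) = lpnorm (seqlaw \<mu>) r u"
proof -
  have "memLp (distr (seqlaw \<mu> \<Otimes>\<^sub>M \<mu>) (seqlaw \<mu>) fst) r u \<longleftrightarrow> memLp (seqlaw \<mu> \<Otimes>\<^sub>M \<mu>) r (\<lambda>x. u (fst x))"
    by (rule memLp_distr(1)[OF measurable_fst assms(2)])
  then show "memLp (seqlaw \<mu> \<Otimes>\<^sub>M \<mu>) r (\<lambda>z. u (fst z)) \<longleftrightarrow> memLp (seqlaw \<mu>) r u"
    using fst_preserve[OF assms(1)] by simp
  have "lpnorm (distr (seqlaw \<mu> \<Otimes>\<^sub>M \<mu>) (seqlaw \<mu>) fst) r u = lpnorm (seqlaw \<mu> \<Otimes>\<^sub>M \<mu>) r (\<lambda>x. u (fst x))"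
    by (rule memLp_distr(2)[OF measurable_fst assms(2)])
  then show "lpnorm (seqlaw \<mu> \<Otimes>\<^sub>M \<mu>) r (\<lambda>z. u (fst z)) = lpnorm (seqlaw \<mu>) r u"
    using fst_preserve[OF assms(1)] by simp
qed

lemma lp_rep:
  assumes "prob_space \<mu>" "u \<in> borel_measurable (seqlaw \<mu>)"
  shows "memLp (seqlaw \<mu> \<Otimes>\<^sub>M \<mu>) r (\<lambda>z. u ((fst z)(s := snd z))) \<longleftrightarrow> memLp (seqlaw \<mu>) r u"
    and "lpnorm (seqlaw \<mu> \<Otimes>\<^sub>M \<mu>) r (\<lambda>z. u ((fst z)(s := snd z))) = lpnorm (seqlaw \<mu>) r u"
proof -
  have "memLp (distr (seqlaw \<mu> \<Otimes>\<^sub>M \<mu>) (seqlaw \<mu>) (\<lambda>z. (fst z)(s := snd z))) r u \<longleftrightarrow> memLp (seqlaw \<mu> \<Otimes>\<^sub>M \<mu>) r (\<lambda>z. u ((fst z)(s := snd z)))"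
    by (rule memLp_distr(1)[OF rep_measurable assms(2)])
  then show "memLp (seqlaw \<mu> \<Otimes>\<^sub>M \<mu>) r (\<lambda>z. u ((fst z)(s := snd z))) \<longleftrightarrow> memLp (seqlaw \<mu>) r u"
    by (simp only: rep_preserve[OF assms(1)])
  have "lpnorm (distr (seqlaw \<mu> \<Otimes>\<^sub>M \<mu>) (seqlaw \<mu>) (\<lambda>z. (fst z)(s := snd z))) r u = lpnorm (seqlaw \<mu> \<Otimes>\<^sub>M \<mu>) r (\<lambda>z. u ((fst z)(s := snd z)))"
    by (rule memLp_distr(2)[OF rep_measurable assms(2)])
  then show "lpnorm (seqlaw \<mu> \<Otimes>\<^sub>M \<mu>) r (\<lambda>z. u ((fst z)(s := snd z))) = lpnorm (seqlaw \<mu>) r u"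
    by (simp only: rep_preserve[OF assms(1)])
qed

lemma pdm_memLp:
  assumes "prob_space \<mu>" "r > 0" "memLp (seqlaw \<mu>) r u"
  shows "memLp (seqlaw \<mu> \<Otimes>\<^sub>M \<mu>) r (\<lambda>z. u (fst z) - u ((fst z)(s := snd z)))"
  using assms memLp_meas[OF assms(3)]
  by (intro memLp_diff) (auto simp: lp_fst lp_rep)

lemma pdm_nonneg: "pdm \<mu> r u s \<ge> 0"
  by (simp add: pdm_def lpnorm_nonneg)

lemma pdm_mono:
  assumes "prob_space \<mu>" "0 < r" "r \<le> r'" "memLp (seqlaw \<mu>) r' u"
  shows "pdm \<mu> r u s \<le> pdm \<mu> r' u s"
  unfolding pdm_def
  by (rule lyapunov(2)[OF prob_Q[OF assms(1)] assms(2,3) pdm_memLp[OF assms(1) _ assms(4)]])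
     (use assms in auto)

lemma lpnorm_uminus: "lpnorm M r (\<lambda>x. - f x) = lpnorm M r f"
  by (simp add: lpnorm_def)

lemma pdm_diff:
  assumes P: "prob_space \<mu>" and r: "r \<ge> 1" and u: "memLp (seqlaw \<mu>) r u" and w: "memLp (seqlaw \<mu>) r w"
  shows "pdm \<mu> r (\<lambda>y. u y - w y) s \<le> pdm \<mu> r u s + pdm \<mu> r w s"
proof -
  let ?Q = "seqlaw \<mu> \<Otimes>\<^sub>M \<mu>"
  let ?Du = "\<lambda>z. u (fst z) - u ((fst z)(s := snd z))"
  let ?Dw = "\<lambda>z. w (fst z) - w ((fst z)(s := snd z))"
  have mu: "memLp ?Q r ?Du" using pdm_memLp[OF P _ u] r by auto
  have mw: "memLp ?Q r (\<lambda>z. - ?Dw z)" by (rule memLp_uminus[OF pdm_memLp[OF P _ w]]) (use r in simp)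
  have eq: "(\<lambda>z. (u (fst z) - w (fst z)) - (u ((fst z)(s := snd z)) - w ((fst z)(s := snd z))))
      = (\<lambda>z. ?Du z + - ?Dw z)" by (auto simp: fun_eq_iff)
  have "pdm \<mu> r (\<lambda>y. u y - w y) s = lpnorm ?Q r (\<lambda>z. ?Du z + - ?Dw z)"
    unfolding pdm_def eq ..
  also have "\<dots> \<le> lpnorm ?Q r ?Du + lpnorm ?Q r (\<lambda>z. - ?Dw z)"
    by (rule minkowski[OF r mu mw])
  also have "\<dots> = pdm \<mu> r u s + pdm \<mu> r w s"
    unfolding pdm_def lpnorm_uminus ..
  finally show ?thesis .
qed

lemma pdm_prod:
  assumes P: "prob_space \<mu>" and p: "p \<ge> 1" and u: "memLp (seqlaw \<mu>) (2*p) u" and v: "memLp (seqlaw \<mu>) (2*p) v"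
  shows "memLp (seqlaw \<mu>) p (\<lambda>y. u y * v y)"
    and "pdm \<mu> p (\<lambda>y. u y * v y) s \<le> lpnorm (seqlaw \<mu>) (2*p) u * pdm \<mu> (2*p) v s
                                      + lpnorm (seqlaw \<mu>) (2*p) v * pdm \<mu> (2*p) u s"
proof -
  show "memLp (seqlaw \<mu>) p (\<lambda>y. u y * v y)" using memLp_mult[OF _ u v] p by simp
  let ?Q = "seqlaw \<mu> \<Otimes>\<^sub>M \<mu>"
  let ?Du = "\<lambda>z. u (fst z) - u ((fst z)(s := snd z))"
  let ?Dv = "\<lambda>z. v (fst z) - v ((fst z)(s := snd z))"
  have um: "u \<in> borel_measurable (seqlaw \<mu>)" "v \<in> borel_measurable (seqlaw \<mu>)"
    using u v by (auto simp: memLp_def)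
  have p0: "p > 0" using p by simp
  have mDu: "memLp ?Q (2*p) ?Du" using pdm_memLp[OF P _ u] p by auto
  have mDv: "memLp ?Q (2*p) ?Dv" using pdm_memLp[OF P _ v] p by auto
  have mu1: "memLp ?Q (2*p) (\<lambda>z. u (fst z))" using lp_fst(1)[OF P um(1)] u by simp
  have mv2: "memLp ?Q (2*p) (\<lambda>z. v ((fst z)(s := snd z)))" using lp_rep(1)[OF P um(2)] v by simp
  have F1: "memLp ?Q p (\<lambda>z. u (fst z) * ?Dv z)" by (rule memLp_mult[OF p0 mu1 mDv])
  have F2: "memLp ?Q p (\<lambda>z. v ((fst z)(s := snd z)) * ?Du z)" by (rule memLp_mult[OF p0 mv2 mDu])
  have eq: "(\<lambda>z. u (fst z) * v (fst z) - u ((fst z)(s := snd z)) * v ((fst z)(s := snd z)))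
      = (\<lambda>z. u (fst z) * ?Dv z + v ((fst z)(s := snd z)) * ?Du z)"
    by (auto simp: fun_eq_iff algebra_simps)
  have "pdm \<mu> p (\<lambda>y. u y * v y) s = lpnorm ?Q p (\<lambda>z. u (fst z) * ?Dv z + v ((fst z)(s := snd z)) * ?Du z)"
    unfolding pdm_def eq ..
  also have "\<dots> \<le> lpnorm ?Q p (\<lambda>z. u (fst z) * ?Dv z) + lpnorm ?Q p (\<lambda>z. v ((fst z)(s := snd z)) * ?Du z)"
    by (rule minkowski[OF p F1 F2])
  also have "lpnorm ?Q p (\<lambda>z. u (fst z) * ?Dv z) \<le> lpnorm ?Q (2*p) (\<lambda>z. u (fst z)) * lpnorm ?Q (2*p) ?Dv"
    by (rule holder2[OF p0 mu1 mDv])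
  also have "lpnorm ?Q p (\<lambda>z. v ((fst z)(s := snd z)) * ?Du z) \<le> lpnorm ?Q (2*p) (\<lambda>z. v ((fst z)(s := snd z))) * lpnorm ?Q (2*p) ?Du"
    by (rule holder2[OF p0 mv2 mDu])
  finally have X: "pdm \<mu> p (\<lambda>y. u y * v y) s \<le> lpnorm ?Q (2*p) (\<lambda>z. u (fst z)) * lpnorm ?Q (2*p) ?Dv
     + lpnorm ?Q (2*p) (\<lambda>z. v ((fst z)(s := snd z))) * lpnorm ?Q (2*p) ?Du"
    by (simp add: fun_upd_def)
  show "pdm \<mu> p (\<lambda>y. u y * v y) s \<le> lpnorm (seqlaw \<mu>) (2*p) u * pdm \<mu> (2*p) v s
                                      + lpnorm (seqlaw \<mu>) (2*p) v * pdm \<mu> (2*p) u s"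
    using X unfolding lp_fst(2)[OF P um(1)] lp_rep(2)[OF P um(2)] pdm_def .
qed

lemma pdm_shift0:
  "pdm \<mu> r (\<lambda>y. u (\<lambda>m. y (Suc m))) 0 = 0"
  by (simp add: pdm_def lpnorm_def)

lemma pdm_shiftS:
  fixes \<mu> :: "'a measure"
  assumes P: "prob_space \<mu>" and u: "u \<in> borel_measurable (seqlaw \<mu>)"
  shows "pdm \<mu> r (\<lambda>y. u (\<lambda>m. y (Suc m))) (Suc s) = pdm \<mu> r u s"
proof -
  interpret m: prob_space \<mu> by fact
  let ?Q = "seqlaw \<mu> \<Otimes>\<^sub>M \<mu>"
  let ?T = "\<lambda>(x :: nat \<Rightarrow> 'a, y :: 'a). ((\<lambda>m. x (Suc m)), (\<lambda>y. y) y)"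
  have Tm: "?T \<in> measurable ?Q ?Q"
    using shift_measurable[of \<mu>] by measurable
  have "distr (seqlaw \<mu>) (seqlaw \<mu>) (\<lambda>y. \<lambda>m. y (Suc m)) \<Otimes>\<^sub>M distr \<mu> \<mu> (\<lambda>y. y)
      = distr ?Q ?Q ?T"
    by (rule pair_measure_distr[OF shift_measurable measurable_ident_sets]) (simp_all add: m.sigma_finite_measure_axioms)
  then have dq: "distr ?Q ?Q ?T = ?Q" by (simp add: shift_preserve[OF P])
  let ?D = "\<lambda>z. u (fst z) - u ((fst z)(s := snd z))"
  have Dm: "?D \<in> borel_measurable ?Q" using u rep_measurable[of s \<mu>] by measurable
  have eq: "(\<lambda>z. ?D (?T z)) = (\<lambda>z. u (\<lambda>m. fst z (Suc m)) - u (\<lambda>m. ((fst z)(Suc s := snd z)) (Suc m)))"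
  proof
    fix z :: "(nat \<Rightarrow> 'a) \<times> 'a"
    have "(\<lambda>m. ((fst z)(Suc s := snd z)) (Suc m)) = (\<lambda>m. fst z (Suc m))(s := snd z)"
      by (auto simp: fun_eq_iff)
    then show "?D (?T z) = u (\<lambda>m. fst z (Suc m)) - u (\<lambda>m. ((fst z)(Suc s := snd z)) (Suc m))"
      by (cases z) simp
  qed
  have "pdm \<mu> r u s = lpnorm (distr ?Q ?Q ?T) r ?D" unfolding dq pdm_def ..
  also have "\<dots> = lpnorm ?Q r (\<lambda>z. ?D (?T z))" by (rule memLp_distr(2)[OF Tm Dm])
  also have "\<dots> = pdm \<mu> r (\<lambda>y. u (\<lambda>m. y (Suc m))) (Suc s)" unfolding eq pdm_def ..
  finally show ?thesis ..
qed

lemma lp_map: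
  fixes \<mu> :: "'a measure" and T :: "'b measure"
  assumes P: "prob_space \<mu>" and \<pi>: "\<pi> \<in> measurable \<mu> T" and u: "u \<in> borel_measurable (seqlaw T)"
  shows "memLp (seqlaw \<mu>) r (\<lambda>y. u (\<lambda>m. \<pi> (y m))) \<longleftrightarrow> memLp (seqlaw (distr \<mu> T \<pi>)) r u"
    and "lpnorm (seqlaw \<mu>) r (\<lambda>y. u (\<lambda>m. \<pi> (y m))) = lpnorm (seqlaw (distr \<mu> T \<pi>)) r u"
  using memLp_distr[OF map_measurable[OF \<pi>] u, of r] unfolding map_preserve[OF P \<pi>] by auto

lemma lp_shift:
  fixes \<mu> :: "'a measure"
  assumes P: "prob_space \<mu>" and u: "u \<in> borel_measurable (seqlaw \<mu>)"
  shows "memLp (seqlaw \<mu>) r (\<lambda>y. u (\<lambda>m. y (Suc m))) \<longleftrightarrow> memLp (seqlaw \<mu>) r u"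
    and "lpnorm (seqlaw \<mu>) r (\<lambda>y. u (\<lambda>m. y (Suc m))) = lpnorm (seqlaw \<mu>) r u"
  using memLp_distr[OF shift_measurable u, of r] unfolding shift_preserve[OF P] by auto

lemma pdm_map:
  fixes \<mu> :: "'a measure" and T :: "'b measure"
  assumes P: "prob_space \<mu>" and \<pi>: "\<pi> \<in> measurable \<mu> T" and u: "u \<in> borel_measurable (seqlaw T)"
  shows "pdm \<mu> r (\<lambda>y. u (\<lambda>m. \<pi> (y m))) s = pdm (distr \<mu> T \<pi>) r u s"
proof -
  interpret m: prob_space \<mu> by fact
  have pd: "prob_space (distr \<mu> T \<pi>)" using \<pi> by (rule m.prob_space_distr)
  let ?Q = "seqlaw \<mu> \<Otimes>\<^sub>M \<mu>"
  let ?R = "seqlaw T \<Otimes>\<^sub>M T"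
  let ?T = "\<lambda>(x :: nat \<Rightarrow> 'a, y :: 'a). ((\<lambda>m. \<pi> (x m)), \<pi> y)"
  have Tm: "?T \<in> measurable ?Q ?R"
    using map_measurable[OF \<pi>] \<pi> by measurable
  have "distr (seqlaw \<mu>) (seqlaw T) (\<lambda>y m. \<pi> (y m)) \<Otimes>\<^sub>M distr \<mu> T \<pi> = distr ?Q ?R ?T"
    by (rule pair_measure_distr[OF map_measurable[OF \<pi>] \<pi>])
       (use pd in \<open>simp add: prob_space_imp_sigma_finite\<close>)
  then have dq: "distr ?Q ?R ?T = seqlaw (distr \<mu> T \<pi>) \<Otimes>\<^sub>M distr \<mu> T \<pi>"
    by (simp add: map_preserve[OF P \<pi>])
  let ?D = "\<lambda>z. u (fst z) - u ((fst z)(s := snd z))"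
  have Dm: "?D \<in> borel_measurable ?R" using u rep_measurable[of s T] by measurable
  have eq: "(\<lambda>z. ?D (?T z)) = (\<lambda>z. u (\<lambda>m. \<pi> (fst z m)) - u (\<lambda>m. \<pi> (((fst z)(s := snd z)) m)))"
  proof
    fix z :: "(nat \<Rightarrow> 'a) \<times> 'a"
    have "(\<lambda>m. \<pi> (((fst z)(s := snd z)) m)) = (\<lambda>m. \<pi> (fst z m))(s := \<pi> (snd z))"
      by (auto simp: fun_eq_iff)
    then show "?D (?T z) = u (\<lambda>m. \<pi> (fst z m)) - u (\<lambda>m. \<pi> (((fst z)(s := snd z)) m))"
      by (cases z) simp
  qed
  have "pdm (distr \<mu> T \<pi>) r u s = lpnorm (distr ?Q ?R ?T) r ?D" unfolding dq pdm_def ..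
  also have "\<dots> = lpnorm ?Q r (\<lambda>z. ?D (?T z))" by (rule memLp_distr(2)[OF Tm Dm])
  also have "\<dots> = pdm \<mu> r (\<lambda>y. u (\<lambda>m. \<pi> (y m))) s" unfolding eq pdm_def ..
  finally show ?thesis ..
qed


definition shdD :: "(nat \<Rightarrow> real) \<Rightarrow> nat \<Rightarrow> real" where
  "shdD D s = (case s of 0 \<Rightarrow> 0 | Suc s' \<Rightarrow> D s')"

lemma factor_bound:
  fixes \<mu> :: "'a measure" and T :: "'b measure"
  assumes P: "prob_space \<mu>" and p: "p \<ge> 1" and \<pi>: "\<pi> \<in> measurable \<mu> T"
    and f: "memLp (seqlaw (distr \<mu> T \<pi>)) r f" and r: "2 * p \<le> r"
  shows "memLp (seqlaw \<mu>) (2*p) (\<lambda>y. f (\<lambda>m. \<pi> (y m)) - f (\<lambda>m. \<pi> (y (Suc m))))"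
    and "pdm \<mu> (2*p) (\<lambda>y. f (\<lambda>m. \<pi> (y m)) - f (\<lambda>m. \<pi> (y (Suc m)))) s
         \<le> pdm (distr \<mu> T \<pi>) r f s + shdD (pdm (distr \<mu> T \<pi>) r f) s"
proof -
  have fm': "f \<in> borel_measurable (seqlaw (distr \<mu> T \<pi>))" using f by (rule memLp_meas)
  have fm: "f \<in> borel_measurable (seqlaw T)"
    using fm' by (simp add: seqlaw_def cong: measurable_cong_sets)
  define U where "U = (\<lambda>y. f (\<lambda>m. \<pi> (y m)))"
  have mU: "memLp (seqlaw \<mu>) r U" unfolding U_def using lp_map(1)[OF P \<pi> fm] f by simp
  have Um: "U \<in> borel_measurable (seqlaw \<mu>)" using mU by (rule memLp_meas)
  have mU1: "memLp (seqlaw \<mu>) r (\<lambda>y. U (\<lambda>m. y (Suc m)))" using lp_shift(1)[OF P Um] mU by simp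
  have p0: "0 < 2 * p" using p by simp
  have mU2: "memLp (seqlaw \<mu>) (2*p) U" using lyapunov(1)[OF prob_seqlaw[OF P] p0 r mU] .
  have mU12: "memLp (seqlaw \<mu>) (2*p) (\<lambda>y. U (\<lambda>m. y (Suc m)))" using lyapunov(1)[OF prob_seqlaw[OF P] p0 r mU1] .
  have eqf: "(\<lambda>y. f (\<lambda>m. \<pi> (y m)) - f (\<lambda>m. \<pi> (y (Suc m)))) = (\<lambda>y. U y - U (\<lambda>m. y (Suc m)))"
    by (simp add: U_def)
  show "memLp (seqlaw \<mu>) (2*p) (\<lambda>y. f (\<lambda>m. \<pi> (y m)) - f (\<lambda>m. \<pi> (y (Suc m))))"
    unfolding eqf using memLp_diff[OF p0 mU2 mU12] .
  have "pdm \<mu> (2*p) (\<lambda>y. U y - U (\<lambda>m. y (Suc m))) s \<le> pdm \<mu> (2*p) U s + pdm \<mu> (2*p) (\<lambda>y. U (\<lambda>m. y (Suc m))) s"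
    using pdm_diff[OF P _ mU2 mU12] p by simp
  also have "pdm \<mu> (2*p) U s \<le> pdm (distr \<mu> T \<pi>) r f s"
  proof -
    have "pdm \<mu> (2*p) U s \<le> pdm \<mu> r U s" by (rule pdm_mono[OF P p0 r mU])
    also have "\<dots> = pdm (distr \<mu> T \<pi>) r f s" unfolding U_def by (rule pdm_map[OF P \<pi> fm])
    finally show ?thesis .
  qed
  also have "pdm \<mu> (2*p) (\<lambda>y. U (\<lambda>m. y (Suc m))) s \<le> shdD (pdm (distr \<mu> T \<pi>) r f) s"
  proof (cases s)
    case 0
    then show ?thesis by (simp add: shdD_def pdm_shift0)
  next
    case (Suc s')
    have "pdm \<mu> (2*p) (\<lambda>y. U (\<lambda>m. y (Suc m))) s = pdm \<mu> (2*p) U s'"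
      unfolding Suc by (rule pdm_shiftS[OF P Um])
    also have "\<dots> \<le> pdm \<mu> r U s'" by (rule pdm_mono[OF P p0 r mU])
    also have "\<dots> = pdm (distr \<mu> T \<pi>) r f s'" unfolding U_def by (rule pdm_map[OF P \<pi> fm])
    finally show ?thesis by (simp add: shdD_def Suc)
  qed
  finally show "pdm \<mu> (2*p) (\<lambda>y. f (\<lambda>m. \<pi> (y m)) - f (\<lambda>m. \<pi> (y (Suc m)))) s
         \<le> pdm (distr \<mu> T \<pi>) r f s + shdD (pdm (distr \<mu> T \<pi>) r f) s"
    unfolding eqf by simp
qed

lemma core:
  fixes \<mu> :: "'a measure" and T1 :: "'b measure" and T2 :: "'c measure"
  assumes P: "prob_space \<mu>" and p: "p \<ge> 1"
    and \<pi>1: "\<pi>1 \<in> measurable \<mu> T1" and f1: "memLp (seqlaw (distr \<mu> T1 \<pi>1)) r1 f1" and r1: "2 * p \<le> r1"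
    and \<pi>2: "\<pi>2 \<in> measurable \<mu> T2" and f2: "memLp (seqlaw (distr \<mu> T2 \<pi>2)) r2 f2" and r2: "2 * p \<le> r2"
  defines "F \<equiv> (\<lambda>y. (f1 (\<lambda>m. \<pi>1 (y m)) - f1 (\<lambda>m. \<pi>1 (y (Suc m))))
                  * (f2 (\<lambda>m. \<pi>2 (y m)) - f2 (\<lambda>m. \<pi>2 (y (Suc m)))))"
  shows "memLp (seqlaw \<mu>) p F"
    and "\<exists>C1 C2. C1 \<ge> 0 \<and> C2 \<ge> 0 \<and> (\<forall>s. pdm \<mu> p F s
          \<le> C1 * (pdm (distr \<mu> T2 \<pi>2) r2 f2 s + shdD (pdm (distr \<mu> T2 \<pi>2) r2 f2) s)
           + C2 * (pdm (distr \<mu> T1 \<pi>1) r1 f1 s + shdD (pdm (distr \<mu> T1 \<pi>1) r1 f1) s))"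
proof -
  let ?U = "\<lambda>y. f1 (\<lambda>m. \<pi>1 (y m)) - f1 (\<lambda>m. \<pi>1 (y (Suc m)))"
  let ?V = "\<lambda>y. f2 (\<lambda>m. \<pi>2 (y m)) - f2 (\<lambda>m. \<pi>2 (y (Suc m)))"
  note A = factor_bound[OF P p \<pi>1 f1 r1]
  note B = factor_bound[OF P p \<pi>2 f2 r2]
  have Fe: "F = (\<lambda>y. ?U y * ?V y)" by (simp add: F_def)
  show "memLp (seqlaw \<mu>) p F" unfolding Fe by (rule pdm_prod(1)[OF P p A(1) B(1)])
  show "\<exists>C1 C2. C1 \<ge> 0 \<and> C2 \<ge> 0 \<and> (\<forall>s. pdm \<mu> p F s
          \<le> C1 * (pdm (distr \<mu> T2 \<pi>2) r2 f2 s + shdD (pdm (distr \<mu> T2 \<pi>2) r2 f2) s)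
           + C2 * (pdm (distr \<mu> T1 \<pi>1) r1 f1 s + shdD (pdm (distr \<mu> T1 \<pi>1) r1 f1) s))"
  proof (intro exI conjI allI)
    show "lpnorm (seqlaw \<mu>) (2*p) ?U \<ge> 0" "lpnorm (seqlaw \<mu>) (2*p) ?V \<ge> 0" by (rule lpnorm_nonneg)+
    fix s
    have "pdm \<mu> p F s \<le> lpnorm (seqlaw \<mu>) (2*p) ?U * pdm \<mu> (2*p) ?V s + lpnorm (seqlaw \<mu>) (2*p) ?V * pdm \<mu> (2*p) ?U s"
      unfolding Fe by (rule pdm_prod(2)[OF P p A(1) B(1)])
    also have "\<dots> \<le> lpnorm (seqlaw \<mu>) (2*p) ?U * (pdm (distr \<mu> T2 \<pi>2) r2 f2 s + shdD (pdm (distr \<mu> T2 \<pi>2) r2 f2) s)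
         + lpnorm (seqlaw \<mu>) (2*p) ?V * (pdm (distr \<mu> T1 \<pi>1) r1 f1 s + shdD (pdm (distr \<mu> T1 \<pi>1) r1 f1) s)"
      by (intro add_mono mult_left_mono A(2) B(2) lpnorm_nonneg)
    finally show "pdm \<mu> p F s \<le> lpnorm (seqlaw \<mu>) (2*p) ?U * (pdm (distr \<mu> T2 \<pi>2) r2 f2 s + shdD (pdm (distr \<mu> T2 \<pi>2) r2 f2) s)
         + lpnorm (seqlaw \<mu>) (2*p) ?V * (pdm (distr \<mu> T1 \<pi>1) r1 f1 s + shdD (pdm (distr \<mu> T1 \<pi>1) r1 f1) s)" .
  qed
qed


lemma O_shift_weaken:
  fixes T :: "nat \<Rightarrow> real"
  assumes O: "T \<in> O(\<lambda>t. real t powr -b)" and b: "0 \<le> \<beta>" "\<beta> \<le> b"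
  shows "\<exists>c N. \<forall>t\<ge>N. \<bar>T t\<bar> \<le> c * real t powr -\<beta> \<and> \<bar>T (t-1)\<bar> \<le> c * real t powr -\<beta>"
proof -
  obtain c where c: "c > 0" and ev: "eventually (\<lambda>t. norm (T t) \<le> c * norm (real t powr -b)) sequentially"
    using landau_o.bigE[OF O] by blast
  then obtain N0 where N0: "\<And>t. t \<ge> N0 \<Longrightarrow> \<bar>T t\<bar> \<le> c * real t powr -b"
    by (auto simp: eventually_sequentially)
  have b0: "b \<ge> 0" using b by simp
  define N where "N = max (N0 + 1) 2"
  show ?thesis
  proof (intro exI allI impI conjI)
    fix t assume t: "N \<le> t"
    then have t1: "real t \<ge> 2" "t \<ge> N0" "t - 1 \<ge> N0" by (auto simp: N_def)
    have mono: "real t powr -b \<le> real t powr -\<beta>" using t1 b by (intro powr_mono) auto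
    have "\<bar>T t\<bar> \<le> c * real t powr -b" using N0 t1 by simp
    also have "\<dots> \<le> c * real t powr -\<beta>" using mono c by simp
    also have "\<dots> \<le> (c * 2 powr b) * real t powr -\<beta>"
      using c b0 ge_one_powr_ge_zero[of 2 b] by (intro mult_right_mono) auto
    finally show "\<bar>T t\<bar> \<le> (c * 2 powr b) * real t powr -\<beta>" .
    have r1: "real (t - 1) \<ge> real t / 2" using t1 by (simp add: of_nat_diff)
    have "\<bar>T (t-1)\<bar> \<le> c * real (t - 1) powr -b" using N0[OF t1(3)] .
    also have "real (t - 1) powr -b \<le> (real t / 2) powr -b"
      using r1 t1 b0 by (intro powr_mono2') auto
    also have "(real t / 2) powr -b = 2 powr b * real t powr -b"
      using t1 by (simp add: powr_divide powr_minus divide_simps)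
    also have "c * (2 powr b * real t powr -b) \<le> (c * 2 powr b) * real t powr -\<beta>"
      using mono c by (simp add: mult.assoc)
    finally show "\<bar>T (t-1)\<bar> \<le> (c * 2 powr b) * real t powr -\<beta>" using c by (simp add: mult_left_mono)
  qed
qed

lemma O_log_drop:
  fixes T :: "nat \<Rightarrow> real"
  assumes O: "T \<in> O(\<lambda>t. real t powr (-\<gamma>) * ln (real t) powr (-A))" and A: "A \<ge> 0"
  shows "T \<in> O(\<lambda>t. real t powr (-\<gamma>))"
proof -
  have "(\<lambda>t. real t powr (-\<gamma>) * ln (real t) powr (-A)) \<in> O(\<lambda>t. real t powr (-\<gamma>))"
  proof (rule landau_o.big_mono)
    show "\<forall>\<^sub>F t in sequentially. norm (real t powr (-\<gamma>) * ln (real t) powr (-A)) \<le> norm (real t powr (-\<gamma>))"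
      unfolding eventually_sequentially
    proof (intro exI allI impI)
      fix t :: nat assume t: "3 \<le> t"
      have "exp 1 \<le> (3::real)" using exp_le by simp
      also have "\<dots> \<le> real t" using t by simp
      finally have "ln (exp 1) \<le> ln (real t)" using t by (subst ln_le_cancel_iff) auto
      then have l1: "1 \<le> ln (real t)" by simp
      have "ln (real t) powr (-A) \<le> 1"
        using l1 A by (simp add: powr_minus ge_one_powr_ge_zero divide_simps)
      moreover have "ln (real t) powr (-A) \<ge> 0" by simp
      ultimately show "norm (real t powr (-\<gamma>) * ln (real t) powr (-A)) \<le> norm (real t powr (-\<gamma>))"
        by (simp add: abs_mult mult_left_le)
    qed
  qed
  then show ?thesis using O by (rule landau_o.big_trans[rotated])
qed

lemma summable_shdD: "summable D \<Longrightarrow> summable (shdD D)"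
  using summable_Suc_iff[of "shdD D"] by (simp add: shdD_def)

lemma shdD_nonneg: "(\<And>s. D s \<ge> 0) \<Longrightarrow> shdD D s \<ge> 0"
  by (simp add: shdD_def split: nat.split)

lemma tail_shdD:
  assumes "summable D" "t \<ge> 1"
  shows "(\<Sum>s. shdD D (s + t)) = (\<Sum>s. D (s + (t - 1)))"
proof -
  obtain t' where t: "t = Suc t'" using assms(2) by (cases t) auto
  show ?thesis unfolding t by (simp add: shdD_def)
qed

lemma tail_O:
  fixes \<delta> D1 D2 :: "nat \<Rightarrow> real"
  assumes \<delta>0: "\<And>s. \<delta> s \<ge> 0" and D10: "\<And>s. D1 s \<ge> 0" and D20: "\<And>s. D2 s \<ge> 0"
    and S1: "summable D1" and S2: "summable D2" and C: "C1 \<ge> 0" "C2 \<ge> 0"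
    and bd: "\<And>s. \<delta> s \<le> C1 * (D2 s + shdD D2 s) + C2 * (D1 s + shdD D1 s)"
    and O1: "(\<lambda>t. \<Sum>s. D1 (s + t)) \<in> O(\<lambda>t. real t powr -b1)"
    and O2: "(\<lambda>t. \<Sum>s. D2 (s + t)) \<in> O(\<lambda>t. real t powr -b2)"
    and \<beta>: "0 \<le> \<beta>" "\<beta> \<le> b1" "\<beta> \<le> b2"
  shows "summable \<delta>" and "(\<lambda>t. \<Sum>s. \<delta> (s + t)) \<in> O(\<lambda>t. real t powr -\<beta>)"
proof -
  define B where "B = (\<lambda>s. C1 * (D2 s + shdD D2 s) + C2 * (D1 s + shdD D1 s))"
  have SB: "summable B" unfolding B_def
    using S1 S2 summable_shdD[OF S1] summable_shdD[OF S2]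
    by (intro summable_add summable_mult summable_add) auto
  show S\<delta>: "summable \<delta>"
    by (rule summable_comparison_test[OF _ SB]) (use \<delta>0 bd in \<open>auto simp: B_def\<close>)
  obtain c1 N1 where c1: "\<And>t. t \<ge> N1 \<Longrightarrow> \<bar>\<Sum>s. D1 (s + t)\<bar> \<le> c1 * real t powr -\<beta> \<and> \<bar>\<Sum>s. D1 (s + (t-1))\<bar> \<le> c1 * real t powr -\<beta>"
    using O_shift_weaken[OF O1 \<beta>(1,2)] by blast
  obtain c2 N2 where c2: "\<And>t. t \<ge> N2 \<Longrightarrow> \<bar>\<Sum>s. D2 (s + t)\<bar> \<le> c2 * real t powr -\<beta> \<and> \<bar>\<Sum>s. D2 (s + (t-1))\<bar> \<le> c2 * real t powr -\<beta>"
    using O_shift_weaken[OF O2 \<beta>(1,3)] by blast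
  show "(\<lambda>t. \<Sum>s. \<delta> (s + t)) \<in> O(\<lambda>t. real t powr -\<beta>)"
  proof (rule bigoI[where c="2 * C1 * c2 + 2 * C2 * c1"])
    show "\<forall>\<^sub>F t in sequentially. norm (\<Sum>s. \<delta> (s + t)) \<le> (2 * C1 * c2 + 2 * C2 * c1) * norm (real t powr -\<beta>)"
      unfolding eventually_sequentially
    proof (intro exI allI impI)
      fix t assume t: "max (max N1 N2) 1 \<le> t"
      have t1: "t \<ge> 1" "t \<ge> N1" "t \<ge> N2" using t by auto
      have sd: "summable (\<lambda>s. \<delta> (s + t))" using S\<delta> by (rule summable_ignore_initial_segment)
      have sb: "summable (\<lambda>s. B (s + t))" using SB by (rule summable_ignore_initial_segment)
      have n0: "0 \<le> (\<Sum>s. \<delta> (s + t))" using sd \<delta>0 by (intro suminf_nonneg) auto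
      have s1: "summable (\<lambda>s. D1 (s + t))" "summable (\<lambda>s. shdD D1 (s + t))"
        using S1 summable_shdD[OF S1] by (auto intro: summable_ignore_initial_segment)
      have s2: "summable (\<lambda>s. D2 (s + t))" "summable (\<lambda>s. shdD D2 (s + t))"
        using S2 summable_shdD[OF S2] by (auto intro: summable_ignore_initial_segment)
      have "(\<Sum>s. \<delta> (s + t)) \<le> (\<Sum>s. B (s + t))"
        using sd sb bd by (intro suminf_le) (auto simp: B_def)
      also have "(\<Sum>s. B (s + t)) = C1 * ((\<Sum>s. D2 (s + t)) + (\<Sum>s. shdD D2 (s + t)))
                                  + C2 * ((\<Sum>s. D1 (s + t)) + (\<Sum>s. shdD D1 (s + t)))"
      proof -
        have e2: "(\<Sum>s. C1 * (D2 (s+t) + shdD D2 (s+t))) = C1 * ((\<Sum>s. D2 (s+t)) + (\<Sum>s. shdD D2 (s+t)))"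
          using s2 by (simp add: suminf_mult summable_add suminf_add)
        have e1: "(\<Sum>s. C2 * (D1 (s+t) + shdD D1 (s+t))) = C2 * ((\<Sum>s. D1 (s+t)) + (\<Sum>s. shdD D1 (s+t)))"
          using s1 by (simp add: suminf_mult summable_add suminf_add)
        have m2: "summable (\<lambda>s. C1 * (D2 (s+t) + shdD D2 (s+t)))" using s2 by (intro summable_mult summable_add)
        have m1: "summable (\<lambda>s. C2 * (D1 (s+t) + shdD D1 (s+t)))" using s1 by (intro summable_mult summable_add)
        show ?thesis unfolding B_def using suminf_add[OF m2 m1] e1 e2 by simp
      qed
      also have "\<dots> = C1 * ((\<Sum>s. D2 (s + t)) + (\<Sum>s. D2 (s + (t - 1))))
                                  + C2 * ((\<Sum>s. D1 (s + t)) + (\<Sum>s. D1 (s + (t - 1))))"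
        using tail_shdD[OF S1 t1(1)] tail_shdD[OF S2 t1(1)] by simp
      also have "\<dots> \<le> C1 * (c2 * real t powr -\<beta> + c2 * real t powr -\<beta>)
                     + C2 * (c1 * real t powr -\<beta> + c1 * real t powr -\<beta>)"
        using c1[OF t1(2)] c2[OF t1(3)] C
        by (intro add_mono mult_left_mono) auto
      also have "\<dots> = (2 * C1 * c2 + 2 * C2 * c1) * norm (real t powr -\<beta>)"
        by (simp add: algebra_simps)
      finally show "norm (\<Sum>s. \<delta> (s + t)) \<le> (2 * C1 * c2 + 2 * C2 * c1) * norm (real t powr -\<beta>)"
        using n0 by simp
    qed
  qed
qed


theorem lemmaA2:
  fixes Me :: "'e measure" and Mx :: "'x measure"
    and \<rho> :: "('e \<times> (nat \<Rightarrow> 'x)) measure"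
    and d :: nat
    and g :: "(nat \<Rightarrow> 'e) \<Rightarrow> real"
    and h :: "nat \<Rightarrow> (nat \<Rightarrow> 'x) \<Rightarrow> real"
    and q q' \<theta> \<gamma> A \<alpha> :: real
  defines "\<mu>\<eta> \<equiv> distr \<rho> Me fst"
    and "\<mu>\<xi> \<equiv> (\<lambda>j. distr \<rho> Mx (\<lambda>z. snd z j))"
    and "\<nu> \<equiv> (\<lambda>j. distr \<rho> (Me \<Otimes>\<^sub>M Mx) (\<lambda>z. (fst z, snd z j)))"
    and "\<mu>G \<equiv> distr \<rho> (PiM {1..d} (\<lambda>_. Mx)) snd"
    and "a \<equiv> (\<lambda>j (y :: nat \<Rightarrow> 'e \<times> 'x).
              (h j (\<lambda>m. snd (y m)) - h j (\<lambda>m. snd (y (Suc m))))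
            * (g (\<lambda>m. fst (y m)) - g (\<lambda>m. fst (y (Suc m)))))"
    and "b \<equiv> (\<lambda>k l (y :: nat \<Rightarrow> (nat \<Rightarrow> 'x)).
              (h k (\<lambda>m. y m k) - h k (\<lambda>m. y (Suc m) k))
            * (h l (\<lambda>m. y m l) - h l (\<lambda>m. y (Suc m) l)))"
  assumes prob: "prob_space \<rho>"
    and sets_rho: "sets \<rho> = sets (Me \<Otimes>\<^sub>M PiM {1..d} (\<lambda>_. Mx))"
    \<comment> \<open>(C1)\<close>
    and q_gt: "q > 4"
    and g_meas: "g \<in> borel_measurable (seqlaw Me)"
    and eps_mean: "(\<integral>x. g x \<partial>seqlaw \<mu>\<eta>) = 0"
    and eps_Lq: "memLp (seqlaw \<mu>\<eta>) q g"
    \<comment> \<open>(C3)\<close>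
    and gamma_def: "\<gamma> = (q\<^sup>2 - 4 + (q - 2) * sqrt (q\<^sup>2 + 20 * q + 4)) / (8 * q)"
    and A_gt: "A > 2 / 3 * (1 / q + 1 + \<gamma>)"
    and C3_sum: "summable (\<lambda>s. pdm \<mu>\<eta> q g s)"
    and C3_tail: "(\<lambda>t::nat. \<Sum>s. pdm \<mu>\<eta> q g (s + t))
                    \<in> O(\<lambda>t. real t powr (- \<gamma>) * ln (real t) powr (- A))"
    \<comment> \<open>(C4)\<close>
    and theta_pos: "\<theta> > 0"
    and q'_gt: "q' > max 4 (\<theta> * q)"
    and h_meas: "\<And>j. j \<in> {1..d} \<Longrightarrow> h j \<in> borel_measurable (seqlaw Mx)"
    and X_mean: "\<And>j. j \<in> {1..d} \<Longrightarrow> (\<integral>x. h j x \<partial>seqlaw (\<mu>\<xi> j)) = 0"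
    and X_Lq': "\<And>j. j \<in> {1..d} \<Longrightarrow> memLp (seqlaw (\<mu>\<xi> j)) q' (h j)"
    \<comment> \<open>(C6)\<close>
    and alpha_gt: "\<alpha> > 1 / 2 - 1 / q'"
    and C6_sum: "\<And>j. j \<in> {1..d} \<Longrightarrow> summable (\<lambda>s. pdm (\<mu>\<xi> j) q' (h j) s)"
    and C6_tail: "\<And>j. j \<in> {1..d} \<Longrightarrow>
                   (\<lambda>t::nat. \<Sum>s. pdm (\<mu>\<xi> j) q' (h j) (s + t)) \<in> O(\<lambda>t. real t powr (- \<alpha>))"
  shows "(\<forall>j \<in> {1..d}.
            let p = min q q' / 2 in
            memLp (seqlaw (\<nu> j)) p (a j)
            \<and> summable (\<lambda>s. pdm (\<nu> j) p (a j) s)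
            \<and> (\<exists>\<alpha>1 > 1 / 2 - 1 / p.
                 (\<lambda>t::nat. \<Sum>s. pdm (\<nu> j) p (a j) (s + t)) \<in> O(\<lambda>t. real t powr (- \<alpha>1))))
       \<and> (\<forall>k \<in> {1..d}. \<forall>l \<in> {1..d}.
            let p = q' / 2 in
            memLp (seqlaw \<mu>G) p (b k l)
            \<and> summable (\<lambda>s. pdm \<mu>G p (b k l) s)
            \<and> (\<exists>\<alpha>2 > 1 / 2 - 1 / p.
                 (\<lambda>t::nat. \<Sum>s. pdm \<mu>G p (b k l) (s + t)) \<in> O(\<lambda>t. real t powr (- \<alpha>2))))"
proof -
  note defs = assms(1-6)
  interpret R: prob_space \<rho> by (rule prob)
  have mfst: "fst \<in> measurable \<rho> Me"
    using measurable_fst[of Me "PiM {1..d} (\<lambda>_. Mx)"] by (simp add: measurable_cong_sets[OF sets_rho refl])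
  have msnd: "snd \<in> measurable \<rho> (PiM {1..d} (\<lambda>_. Mx))"
    using measurable_snd[of Me "PiM {1..d} (\<lambda>_. Mx)"] by (simp add: measurable_cong_sets[OF sets_rho refl])
  have msndj: "(\<lambda>z. snd z j) \<in> measurable \<rho> Mx" if j: "j \<in> {1..d}" for j
    using measurable_compose[OF msnd measurable_component_singleton[OF j, of "\<lambda>_. Mx"]] by simp
  have mpair: "(\<lambda>z. (fst z, snd z j)) \<in> measurable \<rho> (Me \<Otimes>\<^sub>M Mx)" if j: "j \<in> {1..d}" for j
    using mfst msndj[OF j] by (intro measurable_Pair) auto
  have P\<eta>: "prob_space \<mu>\<eta>" unfolding defs using mfst by (rule R.prob_space_distr)
  have P\<nu>: "prob_space (\<nu> j)" if j: "j \<in> {1..d}" for j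
    unfolding defs using mpair[OF j] by (rule R.prob_space_distr)
  have PG: "prob_space \<mu>G" unfolding defs using msnd by (rule R.prob_space_distr)
  have \<nu>fst: "fst \<in> measurable (\<nu> j) Me" for j
    unfolding defs by (simp add: measurable_cong_sets[OF sets_distr refl])
  have \<nu>snd: "snd \<in> measurable (\<nu> j) Mx" for j
    unfolding defs by (simp add: measurable_cong_sets[OF sets_distr refl])
  have Gk: "(\<lambda>v. v k) \<in> measurable \<mu>G Mx" if k: "k \<in> {1..d}" for k
  proof -
    have "(\<lambda>v. v k) \<in> measurable (PiM {1..d} (\<lambda>_. Mx)) Mx"
      using measurable_component_singleton[OF k, of "\<lambda>_. Mx"] by simp
    then show ?thesis unfolding defs by (simp add: measurable_cong_sets[OF sets_distr refl])
  qed
  have d\<nu>fst: "distr (\<nu> j) Me fst = \<mu>\<eta>" if j: "j \<in> {1..d}" for j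
    unfolding defs using mpair[OF j] by (subst distr_distr) (auto simp: comp_def)
  have d\<nu>snd: "distr (\<nu> j) Mx snd = \<mu>\<xi> j" if j: "j \<in> {1..d}" for j
    unfolding defs using mpair[OF j] by (subst distr_distr) (auto simp: comp_def)
  have dGk: "distr \<mu>G Mx (\<lambda>v. v k) = \<mu>\<xi> k" if k: "k \<in> {1..d}" for k
    unfolding defs using msnd k by (subst distr_distr) (auto simp: comp_def)
  have q0: "q > 0" using q_gt by simp
  have q'4: "q' > 4" using q'_gt by simp
  have sq: "sqrt (q\<^sup>2 + 20 * q + 4) \<ge> q"
  proof -
    have "sqrt (q\<^sup>2) \<le> sqrt (q\<^sup>2 + 20 * q + 4)" using q0 by (intro real_sqrt_le_mono) auto
    then show ?thesis using q0 by simp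
  qed
  have gam: "\<gamma> > 1/2"
  proof -
    have "(q - 2) * q \<le> (q - 2) * sqrt (q\<^sup>2 + 20 * q + 4)" using sq q_gt by (intro mult_left_mono) auto
    moreover have "4 * q < q\<^sup>2 - 4 + (q - 2) * q"
    proof -
      have h: "q * q > 4 * q" using q_gt by (intro mult_strict_right_mono) auto
      have e: "q\<^sup>2 - 4 + (q - 2) * q = 2 * (q * q) - 2 * q - 4" by (simp add: power2_eq_square algebra_simps)
      show ?thesis unfolding e using h q_gt by linarith
    qed
    ultimately have "4 * q < q\<^sup>2 - 4 + (q - 2) * sqrt (q\<^sup>2 + 20 * q + 4)" by linarith
    then show ?thesis unfolding gamma_def using q0 by (simp add: field_simps)
  qed
  have A0: "A \<ge> 0"
  proof -
    have "0 < 1 / q" using q0 by simp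
    then have "0 < 2 / 3 * (1 / q + 1 + \<gamma>)" using gam by (intro mult_pos_pos) (simp, linarith)
    then show ?thesis using A_gt by simp
  qed
  have \<alpha>0: "\<alpha> > 0"
  proof -
    have "1 / q' < 1/4" using q'4 by (simp add: field_simps)
    then show ?thesis using alpha_gt by simp
  qed
  have gO: "(\<lambda>t::nat. \<Sum>s. pdm \<mu>\<eta> q g (s + t)) \<in> O(\<lambda>t. real t powr (- \<gamma>))"
    by (rule O_log_drop[OF C3_tail A0])
  show ?thesis
  proof (intro conjI ballI)
    fix j assume j: "j \<in> {1..d}"
    define p where "p = min q q' / 2"
    have p1: "p \<ge> 1" using q_gt q'4 by (simp add: p_def)
    have p2q: "2 * p \<le> q" "2 * p \<le> q'" by (auto simp: p_def)
    have fh: "memLp (seqlaw (distr (\<nu> j) Mx snd)) q' (h j)" using X_Lq'[OF j] by (simp add: d\<nu>snd[OF j])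
    have fg: "memLp (seqlaw (distr (\<nu> j) Me fst)) q g" using eps_Lq by (simp add: d\<nu>fst[OF j])
    note C = core[OF P\<nu>[OF j] p1 \<nu>snd fh p2q(2) \<nu>fst fg p2q(1)]
    have aj: "a j = (\<lambda>y. (h j (\<lambda>m. snd (y m)) - h j (\<lambda>m. snd (y (Suc m))))
                  * (g (\<lambda>m. fst (y m)) - g (\<lambda>m. fst (y (Suc m)))))"
      by (simp add: defs)
    have mem: "memLp (seqlaw (\<nu> j)) p (a j)" unfolding aj by (rule C(1))
    obtain C1 C2 where CC: "C1 \<ge> 0" "C2 \<ge> 0" and bd: "\<And>s. pdm (\<nu> j) p (a j) s
          \<le> C1 * (pdm \<mu>\<eta> q g s + shdD (pdm \<mu>\<eta> q g) s)
           + C2 * (pdm (\<mu>\<xi> j) q' (h j) s + shdD (pdm (\<mu>\<xi> j) q' (h j)) s)"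
      using C(2) unfolding aj[symmetric] d\<nu>snd[OF j] d\<nu>fst[OF j] by blast
    define \<beta> where "\<beta> = min \<alpha> (1/2)"
    have \<beta>: "0 \<le> \<beta>" "\<beta> \<le> \<alpha>" "\<beta> \<le> \<gamma>" using \<alpha>0 gam by (auto simp: \<beta>_def)
    have T: "summable (\<lambda>s. pdm (\<nu> j) p (a j) s)" "(\<lambda>t::nat. \<Sum>s. pdm (\<nu> j) p (a j) (s + t)) \<in> O(\<lambda>t. real t powr (- \<beta>))"
      by (rule tail_O[of "pdm (\<nu> j) p (a j)" "pdm (\<mu>\<xi> j) q' (h j)" "pdm \<mu>\<eta> q g" C1 C2 \<alpha> \<gamma> \<beta>,
        OF pdm_nonneg pdm_nonneg pdm_nonneg C6_sum[OF j] C3_sum CC(1) CC(2) bd C6_tail[OF j] gO \<beta>(1) \<beta>(2) \<beta>(3)])+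
    have \<beta>gt: "\<beta> > 1 / 2 - 1 / p"
    proof -
      have "1 / q' \<le> 1 / p" using p1 p2q by (simp add: field_simps)
      moreover have "1 / p > 0" using p1 by simp
      ultimately show ?thesis using alpha_gt by (auto simp: \<beta>_def)
    qed
    show "let p = min q q' / 2 in
            memLp (seqlaw (\<nu> j)) p (a j)
            \<and> summable (\<lambda>s. pdm (\<nu> j) p (a j) s)
            \<and> (\<exists>\<alpha>1 > 1 / 2 - 1 / p.
                 (\<lambda>t::nat. \<Sum>s. pdm (\<nu> j) p (a j) (s + t)) \<in> O(\<lambda>t. real t powr (- \<alpha>1)))"
      unfolding Let_def p_def[symmetric] using mem T \<beta>gt by blast
  next
    fix k l assume k: "k \<in> {1..d}" and l: "l \<in> {1..d}"
    define p where "p = q' / 2"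
    have p1: "p \<ge> 1" using q'4 by (simp add: p_def)
    have p2q: "2 * p \<le> q'" by (auto simp: p_def)
    have fk: "memLp (seqlaw (distr \<mu>G Mx (\<lambda>v. v k))) q' (h k)" using X_Lq'[OF k] by (simp add: dGk[OF k])
    have fl: "memLp (seqlaw (distr \<mu>G Mx (\<lambda>v. v l))) q' (h l)" using X_Lq'[OF l] by (simp add: dGk[OF l])
    note C = core[OF PG p1 Gk[OF k] fk p2q Gk[OF l] fl p2q]
    have bkl: "b k l = (\<lambda>y. (h k (\<lambda>m. y m k) - h k (\<lambda>m. y (Suc m) k))
                  * (h l (\<lambda>m. y m l) - h l (\<lambda>m. y (Suc m) l)))"
      by (simp add: defs)
    have mem: "memLp (seqlaw \<mu>G) p (b k l)" unfolding bkl using C(1) by simp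
    obtain C1 C2 where CC: "C1 \<ge> 0" "C2 \<ge> 0" and bd: "\<And>s. pdm \<mu>G p (b k l) s
          \<le> C1 * (pdm (\<mu>\<xi> l) q' (h l) s + shdD (pdm (\<mu>\<xi> l) q' (h l)) s)
           + C2 * (pdm (\<mu>\<xi> k) q' (h k) s + shdD (pdm (\<mu>\<xi> k) q' (h k)) s)"
      using C(2) unfolding dGk[OF k] dGk[OF l] by (simp add: bkl) blast
    have \<beta>: "0 \<le> \<alpha>" "\<alpha> \<le> \<alpha>" "\<alpha> \<le> \<alpha>" using \<alpha>0 by auto
    have T: "summable (\<lambda>s. pdm \<mu>G p (b k l) s)" "(\<lambda>t::nat. \<Sum>s. pdm \<mu>G p (b k l) (s + t)) \<in> O(\<lambda>t. real t powr (- \<alpha>))"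
      by (rule tail_O[of "pdm \<mu>G p (b k l)" "pdm (\<mu>\<xi> k) q' (h k)" "pdm (\<mu>\<xi> l) q' (h l)" C1 C2 \<alpha> \<alpha> \<alpha>,
        OF pdm_nonneg pdm_nonneg pdm_nonneg C6_sum[OF k] C6_sum[OF l] CC(1) CC(2) bd C6_tail[OF k] C6_tail[OF l] \<beta>(1) \<beta>(2) \<beta>(3)])+
    have \<beta>gt: "\<alpha> > 1 / 2 - 1 / p"
    proof -
      have "1 / q' \<le> 1 / p" using p1 p2q by (simp add: field_simps)
      then show ?thesis using alpha_gt by simp
    qed
    show "let p = q' / 2 in
            memLp (seqlaw \<mu>G) p (b k l)
            \<and> summable (\<lambda>s. pdm \<mu>G p (b k l) s)
            \<and> (\<exists>\<alpha>2 > 1 / 2 - 1 / p.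
                 (\<lambda>t::nat. \<Sum>s. pdm \<mu>G p (b k l) (s + t)) \<in> O(\<lambda>t. real t powr (- \<alpha>2)))"
      unfolding Let_def p_def[symmetric] using mem T \<beta>gt by blast
  qed
qed


end
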